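(* Let $\{\theta_m\}$ satisfy $\theta_1\ge\theta_2\ge\cdots\ge0$, $\theta_m\to0$; $\mathcal B=\mathcal B(\{\theta_m\})$; $b_1,b_2>0$. There exists $C_2>0$, depending only on $b_1,b_2$ (besides $N$ and $\{\theta_m\}$), such that for all $m,q\in\mathbb N$ with $\theta_{m+1}\le1$ and every $g\in V$ satisfying (H): $\|\mathscr L_g\|_{\mathcal B\to\mathcal B}\le C_2$ and $\|\mathscr L_g^q-K^{(q)}_{g,m}\|_{\mathcal B\to\mathcal B}\le C_2^q\theta_{m+1}^q$.
   Context: $\Sigma_{\mathbf A}^+$ is the one-sided Markov shift of an $N\times N$ zero-one aperiodic matrix $\mathbf A$, $\sigma_{\mathbf A}$ the shift. $\mathrm{var}_k(\phi)=\sup\{|\phi(\omega)-\phi(\omega')|:\omega_j=\omega'_j,\ 0\le j\le k-1\}$; $V=\{\phi:\mathrm{var}_k(\phi)^{1/k}\to0\}$. $(\mathscr L_g\phi)(\omega)=\sum_{\sigma_{\mathbf A}\omega'=\omega}e^{g(\omega')}\phi(\omega')$. $\mathcal B(\{\theta_m\})=\{\phi\in V:\exists C\ge0,\ \mathrm{var}_k(\phi)\le C\theta_{k+1}^k\ \forall k\ge0\}$ with norm $\|\phi\|_\infty+\inf C$. Fix a Borel probability $\mu$ charging all nonempty open sets; $(E_m\phi)(\omega)=\mu([\omega|m])^{-1}\int_{[\omega|m]}\phi\,d\mu$, $[\omega|m]=\{\xi:\xi_j=\omega_j,0\le j\le m-1\}$. $K_{g,m}=\mathscr L_g\circ E_m$,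 $K^{(q)}_{g,m}=\mathscr L_g^q-(\mathscr L_g-K_{g,m})^q$. Condition (H) on $g\in V$: $e^{\max\mathrm{Re}\,g}\le b_1$ and $\mathrm{var}_k(g)\le b_2\theta_k^k$ for all $k\in\mathbb N$. *)

theory Defs
  imports "HOL-Probability.Probability"
begin

type_synonym seq = "nat \<Rightarrow> nat"
type_synonym cfun = "seq \<Rightarrow> complex"

definition zero_one_matrix :: "nat \<Rightarrow> (nat \<Rightarrow> nat \<Rightarrow> nat) \<Rightarrow> bool" where
  "zero_one_matrix N A \<longleftrightarrow> (\<forall>i<N. \<forall>j<N. A i j = 0 \<or> A i j = 1)"

fun mat_pow :: "nat \<Rightarrow> (nat \<Rightarrow> nat \<Rightarrow> nat) \<Rightarrow> nat \<Rightarrow> nat \<Rightarrow> nat \<Rightarrow> nat" where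
  "mat_pow N A 0 i j = (if i = j then 1 else 0)"
| "mat_pow N A (Suc n) i j = (\<Sum>k<N. mat_pow N A n i k * A k j)"

definition aperiodic :: "nat \<Rightarrow> (nat \<Rightarrow> nat \<Rightarrow> nat) \<Rightarrow> bool" where
  "aperiodic N A \<longleftrightarrow> (\<exists>M\<ge>1. \<forall>i<N. \<forall>j<N. mat_pow N A M i j > 0)"

definition Sigma_A :: "nat \<Rightarrow> (nat \<Rightarrow> nat \<Rightarrow> nat) \<Rightarrow> seq set" where
  "Sigma_A N A = {\<omega>. (\<forall>j. \<omega> j < N) \<and> (\<forall>j. A (\<omega> j) (\<omega> (Suc j)) = 1)}"

definition scons :: "nat \<Rightarrow> seq \<Rightarrow> seq" where
  "scons a \<omega> = (\<lambda>j. if j = 0 then a else \<omega> (j - 1))"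

definition var :: "nat \<Rightarrow> (nat \<Rightarrow> nat \<Rightarrow> nat) \<Rightarrow> nat \<Rightarrow> cfun \<Rightarrow> ereal" where
  "var N A k \<phi> = (SUP p \<in> {(\<omega>, \<omega>'). \<omega> \<in> Sigma_A N A \<and> \<omega>' \<in> Sigma_A N A \<and> (\<forall>j<k. \<omega> j = \<omega>' j)}.
       ereal (cmod (\<phi> (fst p) - \<phi> (snd p))))"

definition Vspace :: "nat \<Rightarrow> (nat \<Rightarrow> nat \<Rightarrow> nat) \<Rightarrow> cfun set" where
  "Vspace N A = {\<phi>. (\<forall>\<^sub>F k in sequentially. var N A k \<phi> < \<infinity>) \<and>
       (\<lambda>k. real_of_ereal (var N A k \<phi>) powr (1 / real k)) \<longlonglongrightarrow> 0}"

definition transfer :: "nat \<Rightarrow> (nat \<Rightarrow> nat \<Rightarrow> nat) \<Rightarrow> cfun \<Rightarrow> cfun \<Rightarrow> cfun" where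
  "transfer N A g \<phi> \<omega> = (\<Sum>a\<in>{a. a < N \<and> A a (\<omega> 0) = 1}. exp (g (scons a \<omega>)) * \<phi> (scons a \<omega>))"

definition Bspace :: "nat \<Rightarrow> (nat \<Rightarrow> nat \<Rightarrow> nat) \<Rightarrow> (nat \<Rightarrow> real) \<Rightarrow> cfun set" where
  "Bspace N A \<theta> = {\<phi> \<in> Vspace N A. \<exists>C\<ge>0. \<forall>k. var N A k \<phi> \<le> ereal (C * \<theta> (k + 1) ^ k)}"

text \<open>Sup norm on Sigma_A (0 inserted only to make the empty case well defined).\<close>
definition supnorm :: "nat \<Rightarrow> (nat \<Rightarrow> nat \<Rightarrow> nat) \<Rightarrow> cfun \<Rightarrow> real" where
  "supnorm N A \<phi> = Sup (insert 0 ((\<lambda>\<omega>. cmod (\<phi> \<omega>)) ` Sigma_A N A))"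

definition Bnorm :: "nat \<Rightarrow> (nat \<Rightarrow> nat \<Rightarrow> nat) \<Rightarrow> (nat \<Rightarrow> real) \<Rightarrow> cfun \<Rightarrow> real" where
  "Bnorm N A \<theta> \<phi> = supnorm N A \<phi> + Inf {C. C \<ge> 0 \<and> (\<forall>k. var N A k \<phi> \<le> ereal (C * \<theta> (k + 1) ^ k))}"

definition opnorm_le :: "nat \<Rightarrow> (nat \<Rightarrow> nat \<Rightarrow> nat) \<Rightarrow> (nat \<Rightarrow> real) \<Rightarrow> (cfun \<Rightarrow> cfun) \<Rightarrow> real \<Rightarrow> bool" where
  "opnorm_le N A \<theta> T c \<longleftrightarrow> (\<forall>\<phi>\<in>Bspace N A \<theta>. T \<phi> \<in> Bspace N A \<theta> \<and>
       Bnorm N A \<theta> (T \<phi>) \<le> c * Bnorm N A \<theta> \<phi>)"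

definition cyl :: "nat \<Rightarrow> (nat \<Rightarrow> nat \<Rightarrow> nat) \<Rightarrow> seq \<Rightarrow> nat \<Rightarrow> seq set" where
  "cyl N A \<omega> m = {\<xi> \<in> Sigma_A N A. \<forall>j<m. \<xi> j = \<omega> j}"

definition good_measure :: "nat \<Rightarrow> (nat \<Rightarrow> nat \<Rightarrow> nat) \<Rightarrow> seq measure \<Rightarrow> bool" where
  "good_measure N A \<mu> \<longleftrightarrow> prob_space \<mu> \<and> space \<mu> = Sigma_A N A \<and>
     sets \<mu> = sets (restrict_space borel (Sigma_A N A)) \<and>
     (\<forall>U. open U \<and> U \<inter> Sigma_A N A \<noteq> {} \<longrightarrow> measure \<mu> (U \<inter> Sigma_A N A) > 0)"

definition cond_exp :: "nat \<Rightarrow> (nat \<Rightarrow> nat \<Rightarrow> nat) \<Rightarrow> seq measure \<Rightarrow> nat \<Rightarrow> cfun \<Rightarrow> cfun" where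
  "cond_exp N A \<mu> m \<phi> \<omega> = (LINT \<xi>:cyl N A \<omega> m|\<mu>. \<phi> \<xi>) / complex_of_real (measure \<mu> (cyl N A \<omega> m))"

definition Kop :: "nat \<Rightarrow> (nat \<Rightarrow> nat \<Rightarrow> nat) \<Rightarrow> seq measure \<Rightarrow> cfun \<Rightarrow> nat \<Rightarrow> cfun \<Rightarrow> cfun" where
  "Kop N A \<mu> g m = transfer N A g \<circ> cond_exp N A \<mu> m"

definition Kq :: "nat \<Rightarrow> (nat \<Rightarrow> nat \<Rightarrow> nat) \<Rightarrow> seq measure \<Rightarrow> cfun \<Rightarrow> nat \<Rightarrow> nat \<Rightarrow> cfun \<Rightarrow> cfun" where
  "Kq N A \<mu> g m q = (\<lambda>\<phi>. (transfer N A g ^^ q) \<phi> -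
       ((\<lambda>\<psi>. transfer N A g \<psi> - Kop N A \<mu> g m \<psi>) ^^ q) \<phi>)"

definition condH :: "nat \<Rightarrow> (nat \<Rightarrow> nat \<Rightarrow> nat) \<Rightarrow> (nat \<Rightarrow> real) \<Rightarrow> real \<Rightarrow> real \<Rightarrow> cfun \<Rightarrow> bool" where
  "condH N A \<theta> b1 b2 g \<longleftrightarrow> (\<forall>\<omega>\<in>Sigma_A N A. exp (Re (g \<omega>)) \<le> b1) \<and>
     (\<forall>k\<ge>1. var N A k g \<le> ereal (b2 * \<theta> k ^ k))"

end

theory Submission
  imports Defs
begin


lemma exp_diff_bound:
  fixes u w :: complex and b :: real
  assumes "exp (Re u) \<le> b" "exp (Re w) \<le> b"
  shows "cmod (exp u - exp w) \<le> 3 * b * cmod (u - w)"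
proof -
  have b0: "0 \<le> b" using exp_gt_zero[of "Re w"] assms(2) by linarith
  have ew: "cmod (exp w) \<le> b" using assms by (simp add: norm_exp_eq_Re)
  have eu: "cmod (exp u) \<le> b" using assms by (simp add: norm_exp_eq_Re)
  show ?thesis
  proof (cases "cmod (u - w) \<le> 1")
    case True
    have e: "exp u - exp w = exp w * (exp (u - w) - 1)"
      by (simp add: exp_diff field_simps)
    have t: "cmod (exp (u - w) - 1) \<le> exp (cmod (u - w)) * cmod (u - w)"
      using Taylor_exp_field[of "u - w" 0] by simp
    have "exp (cmod (u - w)) \<le> 3"
      using True exp_le by (meson exp_le_cancel_iff order_trans)
    hence t3: "cmod (exp (u - w) - 1) \<le> 3 * cmod (u - w)"
      using t by (meson mult_right_mono norm_ge_zero order_trans)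
    have "cmod (exp w) * cmod (exp (u - w) - 1) \<le> b * (3 * cmod (u - w))"
      by (rule mult_mono[OF ew t3 b0 norm_ge_zero])
    thus ?thesis unfolding e norm_mult by (simp add: mult.assoc)
  next
    case False
    have "cmod (exp u - exp w) \<le> cmod (exp u) + cmod (exp w)" by (rule norm_triangle_ineq4)
    also have "\<dots> \<le> 2 * b" using eu ew by simp
    also have "\<dots> \<le> 3 * b * cmod (u - w)"
    proof -
      have "3 * b * 1 \<le> 3 * b * cmod (u - w)" using False b0 by (intro mult_left_mono) auto
      thus ?thesis using b0 by simp
    qed
    finally show ?thesis .
  qed
qed

lemma var_le_iff:
  "var N A k \<phi> \<le> ereal r \<longleftrightarrow> (\<forall>x\<in>Sigma_A N A. \<forall>y\<in>Sigma_A N A. (\<forall>j<k. x j = y j) \<longrightarrow> cmod (\<phi> x - \<phi> y) \<le> r)"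
  unfolding var_def by (auto simp: SUP_le_iff)

lemma cyl_open: "open {\<xi>::nat\<Rightarrow>nat. \<forall>j<k. \<xi> j = x j}"
proof -
  have "{\<xi>::nat\<Rightarrow>nat. \<forall>j<k. \<xi> j = x j} = Pi\<^sub>E UNIV (\<lambda>j. if j < k then {x j} else UNIV)"
    by (auto simp: PiE_def Pi_def extensional_def split: if_splits)
  moreover have "open (Pi\<^sub>E UNIV (\<lambda>j. if j < k then {x j} else (UNIV::nat set)))"
  proof (rule open_PiE)
    show "open (if j < k then {x j} else (UNIV::nat set))" for j by (simp add: discrete_topology_class.open_discrete)
    show "finite {j. (if j < k then {x j} else (UNIV::nat set)) \<noteq> UNIV}"
      by (rule finite_subset[of _ "{..<k}"]) auto
  qed
  ultimately show ?thesis by simp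
qed

lemma theta_pow_lim:
  fixes \<theta> :: "nat \<Rightarrow> real"
  assumes nn: "\<forall>m\<ge>1. \<theta> m \<ge> 0" and lim: "\<theta> \<longlonglongrightarrow> 0"
  shows "(\<lambda>k. \<theta> (k + 1) ^ k) \<longlonglongrightarrow> 0"
proof (rule Lim_null_comparison)
  have "\<forall>\<^sub>F n in sequentially. \<theta> n < 1/2" using lim by (rule order_tendstoD) simp
  then obtain M where M: "\<And>n. n \<ge> M \<Longrightarrow> \<theta> n < 1/2" by (auto simp: eventually_sequentially)
  show "\<forall>\<^sub>F k in sequentially. norm (\<theta> (k + 1) ^ k) \<le> (1/2) ^ k"
    unfolding eventually_sequentially
  proof (intro exI allI impI)
    fix k assume "M \<le> k"
    hence "\<theta> (k+1) < 1/2" using M by simp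
    moreover have "\<theta> (k+1) \<ge> 0" using nn by simp
    ultimately show "norm (\<theta> (k + 1) ^ k) \<le> (1/2) ^ k"
      by (simp add: power_mono)
  qed
  show "(\<lambda>k. (1/2::real) ^ k) \<longlonglongrightarrow> 0" by (rule LIMSEQ_power_zero) simp
qed

lemma rootk:
  fixes t :: real assumes "t \<ge> 0" "k \<ge> 1"
  shows "(t ^ k) powr (1 / real k) = t"
proof (cases "t = 0")
  case True thus ?thesis using assms by simp
next
  case False
  hence "t > 0" using assms by simp
  hence "t ^ k = t powr real k" by (simp add: powr_realpow)
  thus ?thesis using assms \<open>t > 0\<close> by (simp add: powr_powr)
qed

lemma real_of_ereal_le:
  assumes "x \<le> ereal y" "0 \<le> y" shows "real_of_ereal x \<le> y"
  using assms by (cases x) auto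

lemma var_real_nonneg: "0 \<le> real_of_ereal (var N A k \<phi>)"
proof (cases "var N A k \<phi> \<ge> 0")
  case True thus ?thesis by (rule real_of_ereal_pos)
next
  case False
  have E: "{(\<omega>, \<omega>'). \<omega> \<in> Sigma_A N A \<and> \<omega>' \<in> Sigma_A N A \<and> (\<forall>j<k. \<omega> j = \<omega>' j)} = {}"
  proof (rule ccontr)
    assume "{(\<omega>, \<omega>'). \<omega> \<in> Sigma_A N A \<and> \<omega>' \<in> Sigma_A N A \<and> (\<forall>j<k. \<omega> j = \<omega>' j)} \<noteq> {}"
    then obtain p where "p \<in> {(\<omega>, \<omega>'). \<omega> \<in> Sigma_A N A \<and> \<omega>' \<in> Sigma_A N A \<and> (\<forall>j<k. \<omega> j = \<omega>' j)}" by blast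
    hence "ereal (cmod (\<phi> (fst p) - \<phi> (snd p))) \<le> var N A k \<phi>"
      unfolding var_def by (rule SUP_upper)
    hence "0 \<le> var N A k \<phi>" by (rule order_trans[rotated]) simp
    with False show False by simp
  qed
  hence "var N A k \<phi> = -\<infinity>" unfolding var_def E by (simp add: bot_ereal_def)
  thus ?thesis by simp
qed

lemma B_intro:
  fixes \<theta> :: "nat \<Rightarrow> real"
  assumes nn: "\<forall>m\<ge>1. \<theta> m \<ge> 0" and lim: "\<theta> \<longlonglongrightarrow> 0"
    and s0: "0 \<le> s" and c0: "0 \<le> c"
    and sb: "\<forall>x\<in>Sigma_A N A. cmod (\<phi> x) \<le> s"
    and vb: "\<forall>k. \<forall>x\<in>Sigma_A N A. \<forall>y\<in>Sigma_A N A. (\<forall>j<k. x j = y j) \<longrightarrow> cmod (\<phi> x - \<phi> y) \<le> c * \<theta> (k+1) ^ k"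
  shows "\<phi> \<in> Bspace N A \<theta> \<and> Bnorm N A \<theta> \<phi> \<le> s + c"
proof -
  have vk: "var N A k \<phi> \<le> ereal (c * \<theta> (k+1) ^ k)" for k
    using vb by (simp add: var_le_iff)
  have tk: "0 \<le> \<theta> (k+1)" for k using nn by simp
  have ck: "0 \<le> c * \<theta> (k+1) ^ k" for k using c0 tk by simp
  have V: "\<phi> \<in> Vspace N A"
    unfolding Vspace_def
  proof (intro CollectI conjI)
    show "\<forall>\<^sub>F k in sequentially. var N A k \<phi> < \<infinity>"
      by (intro always_eventually allI le_less_trans[OF vk]) simp
    let ?r = "\<lambda>k. real_of_ereal (var N A k \<phi>)"
    show "(\<lambda>k. ?r k powr (1 / real k)) \<longlonglongrightarrow> 0"
    proof (rule Lim_null_comparison)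
      show "\<forall>\<^sub>F k in sequentially. norm (?r k powr (1 / real k)) \<le> (c+1) powr (1 / real k) * \<theta> (k+1)"
        unfolding eventually_sequentially
      proof (intro exI allI impI)
        fix k :: nat assume k: "1 \<le> k"
        have "?r k \<le> c * \<theta> (k+1) ^ k" using vk ck by (rule real_of_ereal_le)
        also have "\<dots> \<le> (c+1) * \<theta> (k+1) ^ k" using tk by (simp add: distrib_right)
        finally have r1: "?r k \<le> (c+1) * \<theta> (k+1) ^ k" .
        have "norm (?r k powr (1 / real k)) = ?r k powr (1 / real k)" by simp
        also have "\<dots> \<le> ((c+1) * \<theta> (k+1) ^ k) powr (1 / real k)"
          by (rule powr_mono2) (use r1 var_real_nonneg in auto)
        also have "\<dots> = (c+1) powr (1 / real k) * \<theta> (k+1)"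
          using rootk[OF tk k] by (simp add: powr_mult)
        finally show "norm (?r k powr (1 / real k)) \<le> (c+1) powr (1 / real k) * \<theta> (k+1)" .
      qed
      have "(\<lambda>k. (c+1) powr (1 / real k)) \<longlonglongrightarrow> (c+1) powr 0"
        by (intro tendsto_intros) (use c0 in auto)
      moreover have "(\<lambda>k. \<theta> (k+1)) \<longlonglongrightarrow> 0" using lim by (rule LIMSEQ_Suc[unfolded Suc_eq_plus1])
      ultimately show "(\<lambda>k. (c+1) powr (1 / real k) * \<theta> (k+1)) \<longlonglongrightarrow> 0"
        using tendsto_mult by fastforce
    qed
  qed
  have cS: "c \<in> {C. C \<ge> 0 \<and> (\<forall>k. var N A k \<phi> \<le> ereal (C * \<theta> (k + 1) ^ k))}"
    using c0 vk by simp
  have B: "\<phi> \<in> Bspace N A \<theta>" unfolding Bspace_def using V c0 vk by blast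
  have "supnorm N A \<phi> \<le> s" unfolding supnorm_def
    by (rule cSup_least) (use sb s0 in auto)
  moreover have "Inf {C. C \<ge> 0 \<and> (\<forall>k. var N A k \<phi> \<le> ereal (C * \<theta> (k + 1) ^ k))} \<le> c"
    by (rule cInf_lower[OF cS]) (auto simp: bdd_below_def)
  ultimately show ?thesis using B unfolding Bnorm_def by simp
qed


definition vnorm :: "nat \<Rightarrow> (nat \<Rightarrow> nat \<Rightarrow> nat) \<Rightarrow> (nat \<Rightarrow> real) \<Rightarrow> cfun \<Rightarrow> real" where
  "vnorm N A \<theta> \<phi> = Inf {C. C \<ge> 0 \<and> (\<forall>k. var N A k \<phi> \<le> ereal (C * \<theta> (k + 1) ^ k))}"

lemma B_elim:
  fixes \<theta> :: "nat \<Rightarrow> real"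
  assumes nn: "\<forall>m\<ge>1. \<theta> m \<ge> 0" and B: "\<phi> \<in> Bspace N A \<theta>"
  shows "0 \<le> supnorm N A \<phi> \<and> 0 \<le> vnorm N A \<theta> \<phi> \<and>
         Bnorm N A \<theta> \<phi> = supnorm N A \<phi> + vnorm N A \<theta> \<phi> \<and>
         (\<forall>x\<in>Sigma_A N A. cmod (\<phi> x) \<le> supnorm N A \<phi>) \<and>
         (\<forall>k. \<forall>x\<in>Sigma_A N A. \<forall>y\<in>Sigma_A N A. (\<forall>j<k. x j = y j) \<longrightarrow>
              cmod (\<phi> x - \<phi> y) \<le> vnorm N A \<theta> \<phi> * \<theta> (k+1) ^ k)"
proof -
  let ?S = "{C. C \<ge> 0 \<and> (\<forall>k. var N A k \<phi> \<le> ereal (C * \<theta> (k + 1) ^ k))}"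
  obtain C where C: "C \<in> ?S" using B unfolding Bspace_def by auto
  have C0: "\<forall>x\<in>Sigma_A N A. \<forall>y\<in>Sigma_A N A. cmod (\<phi> x - \<phi> y) \<le> C"
  proof -
    have "var N A 0 \<phi> \<le> ereal C" using C by (metis (no_types, lifting) mem_Collect_eq power_0 mult_1_right)
    thus ?thesis unfolding var_le_iff by simp
  qed
  have bdd: "bdd_above (insert 0 ((\<lambda>\<omega>. cmod (\<phi> \<omega>)) ` Sigma_A N A))"
  proof (cases "Sigma_A N A = {}")
    case True thus ?thesis by simp
  next
    case False
    then obtain x0 where x0: "x0 \<in> Sigma_A N A" by blast
    show ?thesis
    proof (rule bdd_aboveI[of _ "cmod (\<phi> x0) + C"])
      fix y assume "y \<in> insert 0 ((\<lambda>\<omega>. cmod (\<phi> \<omega>)) ` Sigma_A N A)"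
      then consider "y = 0" | z where "z \<in> Sigma_A N A" "y = cmod (\<phi> z)" by blast
      thus "y \<le> cmod (\<phi> x0) + C"
      proof cases
        case 1 thus ?thesis using C by simp
      next
        case 2
        have "cmod (\<phi> z) \<le> cmod (\<phi> x0) + cmod (\<phi> z - \<phi> x0)" by (metis norm_triangle_sub add.commute)
        thus ?thesis using 2 C0 x0 by force
      qed
    qed
  qed
  have s0: "0 \<le> supnorm N A \<phi>" unfolding supnorm_def by (rule cSup_upper[OF _ bdd]) simp
  have sb: "\<forall>x\<in>Sigma_A N A. cmod (\<phi> x) \<le> supnorm N A \<phi>" unfolding supnorm_def
    by (intro ballI cSup_upper[OF _ bdd]) simp
  have v0: "0 \<le> vnorm N A \<theta> \<phi>" unfolding vnorm_def
    by (rule cInf_greatest) (use C in auto)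
  have vb: "cmod (\<phi> x - \<phi> y) \<le> vnorm N A \<theta> \<phi> * \<theta> (k+1) ^ k"
    if x: "x \<in> Sigma_A N A" and y: "y \<in> Sigma_A N A" and xy: "\<forall>j<k. x j = y j" for k x y
  proof -
    let ?t = "\<theta> (k+1) ^ k"
    have t0: "0 \<le> ?t" using nn by simp
    have all: "cmod (\<phi> x - \<phi> y) \<le> C' * ?t" if "C' \<in> ?S" for C'
      using that x y xy var_le_iff[of N A k \<phi> "C' * ?t"] by auto
    show ?thesis
    proof (cases "?t = 0")
      case True thus ?thesis using all[OF C] by (simp only: mult_zero_right)
    next
      case False
      hence tp: "0 < ?t" using t0 by (metis order_le_less)
      have "cmod (\<phi> x - \<phi> y) / ?t \<le> vnorm N A \<theta> \<phi>" unfolding vnorm_def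
      proof (rule cInf_greatest)
        show "?S \<noteq> {}" using C by blast
        fix C' assume "C' \<in> ?S"
        thus "cmod (\<phi> x - \<phi> y) / ?t \<le> C'" using all tp by (simp add: divide_le_eq)
      qed
      thus ?thesis using tp by (simp add: divide_le_eq)
    qed
  qed
  show ?thesis using s0 sb v0 vb unfolding Bnorm_def vnorm_def by blast
qed

lemma B_cont:
  fixes \<theta> :: "nat \<Rightarrow> real"
  assumes nn: "\<forall>m\<ge>1. \<theta> m \<ge> 0" and lim: "\<theta> \<longlonglongrightarrow> 0" and B: "\<phi> \<in> Bspace N A \<theta>"
  shows "continuous_on (Sigma_A N A) \<phi>"
proof -
  note E = B_elim[OF nn B]
  let ?v = "vnorm N A \<theta> \<phi>"
  have lim2: "(\<lambda>k. ?v * \<theta> (k + 1) ^ k) \<longlonglongrightarrow> 0"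
    using tendsto_mult_right_zero[OF theta_pow_lim[OF nn lim]] by simp
  show ?thesis unfolding continuous_on_topological
  proof (intro ballI allI impI)
    fix x Bs assume x: "x \<in> Sigma_A N A" and oB: "open Bs" and xB: "\<phi> x \<in> Bs"
    obtain e where e: "e > 0" "\<And>y. dist y (\<phi> x) < e \<Longrightarrow> y \<in> Bs"
      using oB xB unfolding open_dist by blast
    have "\<forall>\<^sub>F k in sequentially. ?v * \<theta> (k + 1) ^ k < e" using lim2 e(1) by (rule order_tendstoD)
    then obtain k where k: "?v * \<theta> (k + 1) ^ k < e" by (auto simp: eventually_sequentially)
    show "\<exists>U. open U \<and> x \<in> U \<and> (\<forall>y\<in>Sigma_A N A. y \<in> U \<longrightarrow> \<phi> y \<in> Bs)"
    proof (intro exI conjI ballI impI)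
      show "open {\<xi>::nat\<Rightarrow>nat. \<forall>j<k. \<xi> j = x j}" by (rule cyl_open)
      show "x \<in> {\<xi>::nat\<Rightarrow>nat. \<forall>j<k. \<xi> j = x j}" by simp
      fix y assume y: "y \<in> Sigma_A N A" "y \<in> {\<xi>::nat\<Rightarrow>nat. \<forall>j<k. \<xi> j = x j}"
      have "cmod (\<phi> y - \<phi> x) \<le> ?v * \<theta> (k + 1) ^ k" using E x y by auto
      hence "dist (\<phi> y) (\<phi> x) < e" using k by (simp add: dist_norm)
      thus "\<phi> y \<in> Bs" by (rule e(2))
    qed
  qed
qed


lemma E_const:
  assumes "\<forall>j<k. \<omega> j = \<omega>' j" "m \<le> k"
  shows "cond_exp N A \<mu> m \<phi> \<omega> = cond_exp N A \<mu> m \<phi> \<omega>'"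
proof -
  have "cyl N A \<omega> m = cyl N A \<omega>' m" unfolding cyl_def using assms by auto
  thus ?thesis unfolding cond_exp_def by simp
qed

lemma E_close:
  assumes gm: "good_measure N A \<mu>" and cont: "continuous_on (Sigma_A N A) \<phi>"
    and bnd: "\<forall>x\<in>Sigma_A N A. cmod (\<phi> x) \<le> S" and om: "\<omega> \<in> Sigma_A N A"
    and rb: "\<forall>\<xi>\<in>cyl N A \<omega> m. cmod (\<phi> \<omega> - \<phi> \<xi>) \<le> r"
  shows "cmod (\<phi> \<omega> - cond_exp N A \<mu> m \<phi> \<omega>) \<le> r"
proof -
  have ps: "prob_space \<mu>" and sp: "space \<mu> = Sigma_A N A"
    and st: "sets \<mu> = sets (restrict_space borel (Sigma_A N A))"
    and pos: "\<And>U. open U \<Longrightarrow> U \<inter> Sigma_A N A \<noteq> {} \<Longrightarrow> measure \<mu> (U \<inter> Sigma_A N A) > 0"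
    using gm unfolding good_measure_def by auto
  interpret prob_space \<mu> by (rule ps)
  define U where "U = {\<xi>::nat\<Rightarrow>nat. \<forall>j<m. \<xi> j = \<omega> j}"
  define Cy where "Cy = cyl N A \<omega> m"
  have oU: "open U" unfolding U_def by (rule cyl_open)
  have Cy: "Cy = U \<inter> Sigma_A N A" unfolding Cy_def cyl_def U_def by auto
  have omC: "\<omega> \<in> Cy" unfolding Cy_def cyl_def using om by simp
  have CyS: "Cy \<in> sets \<mu>" unfolding st sets_restrict_space Cy
    using borel_open[OF oU] by blast
  have Mpos: "measure \<mu> Cy > 0" unfolding Cy using pos[OF oU] omC Cy by blast
  have CysubS: "Cy \<subseteq> space \<mu>" using sp Cy by auto
  have meas: "\<phi> \<in> borel_measurable \<mu>"
    unfolding measurable_cong_sets[OF st refl, of borel] by (rule borel_measurable_continuous_on_restrict[OF cont])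
  have r0: "0 \<le> r" using rb omC unfolding Cy_def by force
  have S0: "0 \<le> S" using bnd om by (meson norm_ge_zero order_trans)
  let ?f1 = "\<lambda>\<xi>. indicator Cy \<xi> *\<^sub>R \<phi> \<xi>"
  let ?f2 = "\<lambda>\<xi>. indicator Cy \<xi> *\<^sub>R \<phi> \<omega>"
  have i1: "integrable \<mu> ?f1"
  proof (rule integrable_const_bound[where B = S])
    show "AE x in \<mu>. norm (?f1 x) \<le> S"
      using bnd S0 sp by (intro AE_I2) (auto simp: indicator_def)
    show "?f1 \<in> borel_measurable \<mu>" using meas CyS by measurable
  qed
  have i2: "integrable \<mu> ?f2"
  proof (rule integrable_const_bound[where B = "cmod (\<phi> \<omega>)"])
    show "AE x in \<mu>. norm (?f2 x) \<le> cmod (\<phi> \<omega>)"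
      by (intro AE_I2) (auto simp: indicator_def)
    show "?f2 \<in> borel_measurable \<mu>" using CyS by measurable
  qed
  have I2: "integral\<^sup>L \<mu> ?f2 = measure \<mu> Cy *\<^sub>R \<phi> \<omega>"
  proof (subst integral_scaleR_left)
    show "integrable \<mu> (indicator Cy :: _ \<Rightarrow> real)" using CyS by (intro integrable_real_indicator) (auto simp: less_top[symmetric])
    show "integral\<^sup>L \<mu> (indicator Cy :: _ \<Rightarrow> real) *\<^sub>R \<phi> \<omega> = measure \<mu> Cy *\<^sub>R \<phi> \<omega>"
      using CysubS by (simp add: Int_absorb2)
  qed
  have CE: "cond_exp N A \<mu> m \<phi> \<omega> = integral\<^sup>L \<mu> ?f1 / complex_of_real (measure \<mu> Cy)"
    unfolding cond_exp_def Cy_def set_lebesgue_integral_def by simp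
  have "\<phi> \<omega> - cond_exp N A \<mu> m \<phi> \<omega> = (integral\<^sup>L \<mu> ?f2 - integral\<^sup>L \<mu> ?f1) / complex_of_real (measure \<mu> Cy)"
    unfolding CE I2 using Mpos by (simp add: scaleR_conv_of_real field_simps)
  also have "\<dots> = integral\<^sup>L \<mu> (\<lambda>\<xi>. ?f2 \<xi> - ?f1 \<xi>) / complex_of_real (measure \<mu> Cy)"
    using i1 i2 by simp
  finally have eq: "\<phi> \<omega> - cond_exp N A \<mu> m \<phi> \<omega> = integral\<^sup>L \<mu> (\<lambda>\<xi>. ?f2 \<xi> - ?f1 \<xi>) / complex_of_real (measure \<mu> Cy)" .
  have "norm (integral\<^sup>L \<mu> (\<lambda>\<xi>. ?f2 \<xi> - ?f1 \<xi>)) \<le> integral\<^sup>L \<mu> (\<lambda>\<xi>. norm (?f2 \<xi> - ?f1 \<xi>))"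
    by (rule integral_norm_bound)
  also have "\<dots> \<le> integral\<^sup>L \<mu> (\<lambda>\<xi>. indicator Cy \<xi> * r)"
  proof (rule integral_mono)
    show "integrable \<mu> (\<lambda>\<xi>. norm (?f2 \<xi> - ?f1 \<xi>))" using Bochner_Integration.integrable_diff[OF i2 i1] by (rule integrable_norm)
    show "integrable \<mu> (\<lambda>\<xi>. indicator Cy \<xi> * r)" using CyS by (intro integrable_mult_left integrable_real_indicator) (auto simp: less_top[symmetric])
    fix x assume "x \<in> space \<mu>"
    show "norm (?f2 x - ?f1 x) \<le> indicator Cy x * r"
      using rb r0 unfolding Cy_def by (auto simp: indicator_def simp flip: scaleR_diff_right)
  qed
  also have "\<dots> = measure \<mu> Cy * r" using CysubS CyS by (simp add: Int_absorb2)
  finally have nb: "norm (integral\<^sup>L \<mu> (\<lambda>\<xi>. ?f2 \<xi> - ?f1 \<xi>)) \<le> measure \<mu> Cy * r" .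
  show ?thesis unfolding eq using nb Mpos by (simp add: norm_divide divide_le_eq mult.commute)
qed


lemma scons_Sigma:
  assumes "\<omega> \<in> Sigma_A N A" "a < N" "A a (\<omega> 0) = 1"
  shows "scons a \<omega> \<in> Sigma_A N A"
proof -
  have "scons a \<omega> j < N" for j using assms unfolding Sigma_A_def scons_def by auto
  moreover have "A (scons a \<omega> j) (scons a \<omega> (Suc j)) = 1" for j
  proof (cases j)
    case 0 thus ?thesis using assms unfolding scons_def by simp
  next
    case (Suc i) thus ?thesis using assms unfolding Sigma_A_def scons_def by simp
  qed
  ultimately show ?thesis unfolding Sigma_A_def by blast
qed

lemma sum_le_card_bound:
  fixes f :: "nat \<Rightarrow> real"
  assumes "\<And>a. a \<in> I \<Longrightarrow> f a \<le> K" "I \<subseteq> {..<N}" "0 \<le> K"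
  shows "sum f I \<le> real N * K"
proof -
  have fin: "finite I" using assms(2) finite_subset by blast
  have "sum f I \<le> of_nat (card I) * K" using sum_bounded_above[of I f K] assms(1) by simp
  also have "\<dots> \<le> real N * K"
    using card_mono[OF _ assms(2)] assms(3) by (intro mult_right_mono) auto
  finally show ?thesis .
qed

lemma L_sup:
  assumes H: "condH N A \<theta> b1 b2 g" and om: "\<omega> \<in> Sigma_A N A"
    and S0: "0 \<le> S" and b10: "0 \<le> b1" and bnd: "\<forall>x\<in>Sigma_A N A. cmod (\<psi> x) \<le> S"
  shows "cmod (transfer N A g \<psi> \<omega>) \<le> real N * (b1 * S)"
proof -
  let ?I = "{a. a < N \<and> A a (\<omega> 0) = 1}"
  have "cmod (transfer N A g \<psi> \<omega>) \<le> (\<Sum>a\<in>?I. cmod (exp (g (scons a \<omega>)) * \<psi> (scons a \<omega>)))"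
    unfolding transfer_def by (rule norm_sum)
  also have "\<dots> \<le> real N * (b1 * S)"
  proof (rule sum_le_card_bound)
    fix a assume "a \<in> ?I"
    hence x: "scons a \<omega> \<in> Sigma_A N A" using scons_Sigma om by blast
    have "cmod (exp (g (scons a \<omega>))) \<le> b1" using H x unfolding condH_def by (simp add: norm_exp_eq_Re)
    moreover have "cmod (\<psi> (scons a \<omega>)) \<le> S" using bnd x by blast
    ultimately show "cmod (exp (g (scons a \<omega>)) * \<psi> (scons a \<omega>)) \<le> b1 * S"
      unfolding norm_mult using b10 by (intro mult_mono) auto
  qed (use S0 b10 in auto)
  finally show ?thesis .
qed

lemma L_var:
  assumes H: "condH N A \<theta> b1 b2 g" and om: "\<omega> \<in> Sigma_A N A" and om': "\<omega>' \<in> Sigma_A N A"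
    and ag: "\<forall>j<k. \<omega> j = \<omega>' j" and k1: "1 \<le> k"
    and S0: "0 \<le> S" and W0: "0 \<le> W" and b10: "0 \<le> b1" and b20: "0 \<le> b2" and t0: "0 \<le> \<theta> (k+1)"
    and bnd: "\<forall>x\<in>Sigma_A N A. cmod (\<psi> x) \<le> S"
    and wb: "\<forall>x\<in>Sigma_A N A. \<forall>y\<in>Sigma_A N A. (\<forall>j<k+1. x j = y j) \<longrightarrow> cmod (\<psi> x - \<psi> y) \<le> W"
  shows "cmod (transfer N A g \<psi> \<omega> - transfer N A g \<psi> \<omega>') \<le> real N * (b1 * W + 3 * b1 * (b2 * \<theta> (k+1) ^ (k+1)) * S)"
proof -
  have o0: "\<omega>' 0 = \<omega> 0" using ag k1 by simp
  let ?I = "{a. a < N \<and> A a (\<omega> 0) = 1}"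
  have gv: "var N A (k+1) g \<le> ereal (b2 * \<theta> (k+1) ^ (k+1))" using H unfolding condH_def
    by (metis le_add2)
  have "transfer N A g \<psi> \<omega> - transfer N A g \<psi> \<omega>' =
        (\<Sum>a\<in>?I. exp (g (scons a \<omega>)) * \<psi> (scons a \<omega>) - exp (g (scons a \<omega>')) * \<psi> (scons a \<omega>'))"
    unfolding transfer_def o0 by (simp add: sum_subtractf)
  hence "cmod (transfer N A g \<psi> \<omega> - transfer N A g \<psi> \<omega>') \<le>
      (\<Sum>a\<in>?I. cmod (exp (g (scons a \<omega>)) * \<psi> (scons a \<omega>) - exp (g (scons a \<omega>')) * \<psi> (scons a \<omega>')))"
    by (simp add: norm_sum)
  also have "\<dots> \<le> real N * (b1 * W + 3 * b1 * (b2 * \<theta> (k+1) ^ (k+1)) * S)"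
  proof (rule sum_le_card_bound)
    fix a assume "a \<in> ?I"
    hence x: "scons a \<omega> \<in> Sigma_A N A" and y: "scons a \<omega>' \<in> Sigma_A N A"
      using scons_Sigma om om' o0 by auto
    have xy: "\<forall>j<k+1. scons a \<omega> j = scons a \<omega>' j" using ag unfolding scons_def by auto
    let ?x = "scons a \<omega>" and ?y = "scons a \<omega>'"
    have ex: "exp (Re (g ?x)) \<le> b1" and ey: "exp (Re (g ?y)) \<le> b1" using H x y unfolding condH_def by auto
    have gd: "cmod (g ?x - g ?y) \<le> b2 * \<theta> (k+1) ^ (k+1)" using gv x y xy unfolding var_le_iff by blast
    have pd: "cmod (\<psi> ?x - \<psi> ?y) \<le> W" using wb x y xy by blast
    have py: "cmod (\<psi> ?y) \<le> S" using bnd y by blast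
    have "exp (g ?x) * \<psi> ?x - exp (g ?y) * \<psi> ?y = exp (g ?x) * (\<psi> ?x - \<psi> ?y) + (exp (g ?x) - exp (g ?y)) * \<psi> ?y"
      by (simp add: algebra_simps)
    hence "cmod (exp (g ?x) * \<psi> ?x - exp (g ?y) * \<psi> ?y) \<le> cmod (exp (g ?x)) * cmod (\<psi> ?x - \<psi> ?y) + cmod (exp (g ?x) - exp (g ?y)) * cmod (\<psi> ?y)"
      by (metis norm_mult norm_triangle_ineq)
    also have "\<dots> \<le> b1 * W + (3 * b1 * (b2 * \<theta> (k+1) ^ (k+1))) * S"
    proof (rule add_mono)
      show "cmod (exp (g ?x)) * cmod (\<psi> ?x - \<psi> ?y) \<le> b1 * W"
        using ex pd b10 by (intro mult_mono) (auto simp: norm_exp_eq_Re)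
      have "cmod (exp (g ?x) - exp (g ?y)) \<le> 3 * b1 * cmod (g ?x - g ?y)" by (rule exp_diff_bound[OF ex ey])
      also have "\<dots> \<le> 3 * b1 * (b2 * \<theta> (k+1) ^ (k+1))" using gd b10 by (intro mult_left_mono) auto
      finally show "cmod (exp (g ?x) - exp (g ?y)) * cmod (\<psi> ?y) \<le> (3 * b1 * (b2 * \<theta> (k+1) ^ (k+1))) * S"
        using py b10 b20 t0 by (intro mult_mono) auto
    qed
    finally show "cmod (exp (g ?x) * \<psi> ?x - exp (g ?y) * \<psi> ?y) \<le> b1 * W + 3 * b1 * (b2 * \<theta> (k+1) ^ (k+1)) * S" .
  qed (use S0 W0 b10 b20 t0 in auto)
  finally show ?thesis .
qed


lemma theta_mono:
  fixes \<theta> :: "nat \<Rightarrow> real"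
  assumes mo: "\<forall>m\<ge>1. \<theta> (Suc m) \<le> \<theta> m" and "1 \<le> i" "i \<le> j"
  shows "\<theta> j \<le> \<theta> i"
  using assms(3)
proof (induction j rule: dec_induct)
  case base thus ?case by simp
next
  case (step n)
  have "\<theta> (Suc n) \<le> \<theta> n" using mo step.hyps assms(2) by simp
  thus ?case using step.IH by simp
qed

lemma L_gen:
  fixes \<theta> :: "nat \<Rightarrow> real"
  assumes mo: "\<forall>m\<ge>1. \<theta> (Suc m) \<le> \<theta> m" and nn: "\<forall>m\<ge>1. \<theta> m \<ge> 0" and lim: "\<theta> \<longlonglongrightarrow> 0"
    and b1: "b1 > 0" and b2: "b2 > 0" and H: "condH N A \<theta> b1 b2 g"
    and S0: "0 \<le> S" and Wc0: "0 \<le> Wc"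
    and bnd: "\<forall>x\<in>Sigma_A N A. cmod (\<psi> x) \<le> S"
    and wb: "\<forall>k\<ge>1. \<forall>x\<in>Sigma_A N A. \<forall>y\<in>Sigma_A N A. (\<forall>j<k+1. x j = y j) \<longrightarrow> cmod (\<psi> x - \<psi> y) \<le> Wc * \<theta> (k+1) ^ k"
  shows "transfer N A g \<psi> \<in> Bspace N A \<theta> \<and>
         Bnorm N A \<theta> (transfer N A g \<psi>) \<le> real N * b1 * (3 * S + Wc + 3 * b2 * \<theta> 1 * S)"
proof -
  let ?T1 = "\<theta> 1"
  let ?L = "transfer N A g \<psi>"
  define c' where "c' = real N * b1 * (2 * S + Wc + 3 * b2 * ?T1 * S)"
  have T10: "0 \<le> ?T1" using nn by simp
  have Nb: "0 \<le> real N * b1" using b1 by simp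
  have c'0: "0 \<le> c'" unfolding c'_def using Nb S0 Wc0 b2 T10 by simp
  have sup: "\<forall>x\<in>Sigma_A N A. cmod (?L x) \<le> real N * (b1 * S)"
    using L_sup[OF H _ S0 _ bnd] b1 by simp
  have var: "cmod (?L x - ?L y) \<le> c' * \<theta> (k+1) ^ k"
    if x: "x \<in> Sigma_A N A" and y: "y \<in> Sigma_A N A" and xy: "\<forall>j<k. x j = y j" for k x y
  proof (cases "k = 0")
    case True
    have "cmod (?L x - ?L y) \<le> cmod (?L x) + cmod (?L y)" by (rule norm_triangle_ineq4)
    also have "\<dots> \<le> real N * (b1 * S) + real N * (b1 * S)" using sup x y by (intro add_mono) auto
    also have "\<dots> \<le> c'"
    proof -
      have "0 \<le> real N * b1 * (Wc + 3 * b2 * ?T1 * S)"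
        using Nb S0 Wc0 b1 b2 T10 by (intro mult_nonneg_nonneg add_nonneg_nonneg) auto
      moreover have "c' = real N * (b1 * S) + real N * (b1 * S) + real N * b1 * (Wc + 3 * b2 * ?T1 * S)"
        unfolding c'_def by (simp add: algebra_simps)
      ultimately show ?thesis by linarith
    qed
    finally show ?thesis using True by simp
  next
    case False
    hence k1: "1 \<le> k" by simp
    let ?t = "\<theta> (k+1) ^ k"
    have tk0: "0 \<le> \<theta> (k+1)" using nn by simp
    have t0: "0 \<le> ?t" using tk0 by simp
    have tkT: "\<theta> (k+1) \<le> ?T1" using theta_mono[OF mo, of 1 "k+1"] by simp
    have "cmod (?L x - ?L y) \<le> real N * (b1 * (Wc * ?t) + 3 * b1 * (b2 * \<theta> (k+1) ^ (k+1)) * S)"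
      by (rule L_var[OF H x y xy k1 S0 _ _ _ tk0 bnd]) (use Wc0 t0 b1 b2 wb k1 in auto)
    also have "\<dots> \<le> real N * (b1 * (Wc * ?t) + 3 * b1 * (b2 * (?T1 * ?t)) * S)"
    proof -
      have "\<theta> (k+1) ^ (k+1) \<le> ?T1 * ?t" using tkT t0 by (simp add: mult_right_mono)
      hence "3 * b1 * (b2 * \<theta> (k+1) ^ (k+1)) * S \<le> 3 * b1 * (b2 * (?T1 * ?t)) * S"
        using b1 b2 S0 by (intro mult_right_mono mult_left_mono) auto
      thus ?thesis by (intro mult_left_mono) auto
    qed
    also have "\<dots> = real N * b1 * (Wc + 3 * b2 * ?T1 * S) * ?t" by (simp add: algebra_simps)
    also have "\<dots> \<le> c' * ?t" unfolding c'_def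
      using Nb S0 t0 by (intro mult_right_mono mult_left_mono) auto
    finally show ?thesis .
  qed
  have "?L \<in> Bspace N A \<theta> \<and> Bnorm N A \<theta> ?L \<le> real N * (b1 * S) + c'"
    by (rule B_intro[OF nn lim]) (use Nb S0 c'0 sup var in \<open>auto simp: mult.assoc[symmetric]\<close>)
  moreover have "real N * (b1 * S) + c' = real N * b1 * (3 * S + Wc + 3 * b2 * \<theta> 1 * S)"
    unfolding c'_def by (simp add: algebra_simps)
  ultimately show ?thesis by simp
qed


lemma L_norm:
  fixes \<theta> :: "nat \<Rightarrow> real"
  assumes mo: "\<forall>m\<ge>1. \<theta> (Suc m) \<le> \<theta> m" and nn: "\<forall>m\<ge>1. \<theta> m \<ge> 0" and lim: "\<theta> \<longlonglongrightarrow> 0"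
    and b1: "b1 > 0" and b2: "b2 > 0" and H: "condH N A \<theta> b1 b2 g"
    and B: "\<phi> \<in> Bspace N A \<theta>"
  shows "transfer N A g \<phi> \<in> Bspace N A \<theta> \<and>
         Bnorm N A \<theta> (transfer N A g \<phi>) \<le> (real N * b1 * (5 + \<theta> 1 * (1 + 3 * b2)) + 1) * Bnorm N A \<theta> \<phi>"
proof -
  note E = B_elim[OF nn B]
  let ?s = "supnorm N A \<phi>" and ?v = "vnorm N A \<theta> \<phi>" and ?T1 = "\<theta> 1"
  have s0: "0 \<le> ?s" and v0: "0 \<le> ?v" using E by auto
  have T10: "0 \<le> ?T1" using nn by simp
  have wb: "\<forall>k\<ge>1. \<forall>x\<in>Sigma_A N A. \<forall>y\<in>Sigma_A N A. (\<forall>j<k+1. x j = y j) \<longrightarrow> cmod (\<phi> x - \<phi> y) \<le> (?T1 * ?v) * \<theta> (k+1) ^ k"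
  proof (intro allI impI ballI)
    fix k x y assume k: "1 \<le> k" and x: "x \<in> Sigma_A N A" and y: "y \<in> Sigma_A N A" and xy: "\<forall>j<k+1. x j = y j"
    have "cmod (\<phi> x - \<phi> y) \<le> ?v * \<theta> (k+1+1) ^ (k+1)" using E x y xy by blast
    also have "\<dots> \<le> ?v * (?T1 * \<theta> (k+1) ^ k)"
    proof (rule mult_left_mono[OF _ v0])
      have a: "\<theta> (k+2) \<le> \<theta> (k+1)" using theta_mono[OF mo, of "k+1" "k+2"] by simp
      have b: "0 \<le> \<theta> (k+2)" using nn by simp
      have c: "\<theta> (k+1) \<le> ?T1" using theta_mono[OF mo, of 1 "k+1"] by simp
      have "\<theta> (k+2) ^ (k+1) \<le> \<theta> (k+1) ^ (k+1)" using a b by (rule power_mono)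
      also have "\<dots> = \<theta> (k+1) * \<theta> (k+1) ^ k" by simp
      also have "\<dots> \<le> ?T1 * \<theta> (k+1) ^ k" using c nn by (intro mult_right_mono) auto
      finally show "\<theta> (k+1+1) ^ (k+1) \<le> ?T1 * \<theta> (k+1) ^ k" by (simp add: numeral_2_eq_2)
    qed
    finally show "cmod (\<phi> x - \<phi> y) \<le> (?T1 * ?v) * \<theta> (k+1) ^ k" by (simp add: algebra_simps)
  qed
  have G: "transfer N A g \<phi> \<in> Bspace N A \<theta> \<and>
         Bnorm N A \<theta> (transfer N A g \<phi>) \<le> real N * b1 * (3 * ?s + ?T1 * ?v + 3 * b2 * \<theta> 1 * ?s)"
    by (rule L_gen[OF mo nn lim b1 b2 H s0 _ _ wb]) (use T10 v0 E in auto)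
  have "real N * b1 * (3 * ?s + ?T1 * ?v + 3 * b2 * \<theta> 1 * ?s) \<le> (real N * b1 * (5 + \<theta> 1 * (1 + 3 * b2)) + 1) * (?s + ?v)"
  proof -
    have "0 \<le> real N * b1 * (2 * ?s + 5 * ?v + ?T1 * ?s + 3 * b2 * ?T1 * ?v) + (?s + ?v)"
      using b1 b2 s0 v0 T10 by (intro add_nonneg_nonneg mult_nonneg_nonneg) auto
    moreover have "(real N * b1 * (5 + \<theta> 1 * (1 + 3 * b2)) + 1) * (?s + ?v) =
        real N * b1 * (3 * ?s + ?T1 * ?v + 3 * b2 * \<theta> 1 * ?s) +
        (real N * b1 * (2 * ?s + 5 * ?v + ?T1 * ?s + 3 * b2 * ?T1 * ?v) + (?s + ?v))"
      by (simp add: algebra_simps)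
    ultimately show ?thesis by linarith
  qed
  thus ?thesis using G E by simp
qed

lemma P_norm:
  fixes \<theta> :: "nat \<Rightarrow> real"
  assumes mo: "\<forall>m\<ge>1. \<theta> (Suc m) \<le> \<theta> m" and nn: "\<forall>m\<ge>1. \<theta> m \<ge> 0" and lim: "\<theta> \<longlonglongrightarrow> 0"
    and b1: "b1 > 0" and b2: "b2 > 0" and H: "condH N A \<theta> b1 b2 g"
    and gm: "good_measure N A \<mu>" and m1: "1 \<le> m" and tm1: "\<theta> (m+1) \<le> 1"
    and B: "\<phi> \<in> Bspace N A \<theta>"
  shows "transfer N A g \<phi> - Kop N A \<mu> g m \<phi> \<in> Bspace N A \<theta> \<and>
         Bnorm N A \<theta> (transfer N A g \<phi> - Kop N A \<mu> g m \<phi>) \<le>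
            ((real N * b1 * (5 + \<theta> 1 * (1 + 3 * b2)) + 1) * \<theta> (m+1)) * Bnorm N A \<theta> \<phi>"
proof -
  note E = B_elim[OF nn B]
  let ?s = "supnorm N A \<phi>" and ?v = "vnorm N A \<theta> \<phi>" and ?T1 = "\<theta> 1" and ?\<tau> = "\<theta> (m+1)"
  have s0: "0 \<le> ?s" and v0: "0 \<le> ?v" using E by auto
  have T10: "0 \<le> ?T1" using nn by simp
  have \<tau>0: "0 \<le> ?\<tau>" using nn by simp
  define \<psi> where "\<psi> = (\<lambda>x. \<phi> x - cond_exp N A \<mu> m \<phi> x)"
  have Peq: "transfer N A g \<phi> - Kop N A \<mu> g m \<phi> = transfer N A g \<psi>"
    unfolding Kop_def transfer_def \<psi>_def by (rule ext) (simp add: sum_subtractf right_diff_distrib)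
  have cont: "continuous_on (Sigma_A N A) \<phi>" by (rule B_cont[OF nn lim B])
  have supm: "cmod (\<psi> x) \<le> ?v * ?\<tau> ^ m" if x: "x \<in> Sigma_A N A" for x
    unfolding \<psi>_def
  proof (rule E_close[OF gm cont _ x])
    show "\<forall>x\<in>Sigma_A N A. cmod (\<phi> x) \<le> ?s" using E by blast
    show "\<forall>\<xi>\<in>cyl N A x m. cmod (\<phi> x - \<phi> \<xi>) \<le> ?v * ?\<tau> ^ m"
      using E x unfolding cyl_def by auto
  qed
  have tpm: "?\<tau> ^ m \<le> ?\<tau>" using power_decreasing[of 1 m ?\<tau>] m1 \<tau>0 tm1 by simp
  have sup: "\<forall>x\<in>Sigma_A N A. cmod (\<psi> x) \<le> ?v * ?\<tau>"
    using supm tpm v0 by (meson mult_left_mono order_trans)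
  have wb: "\<forall>k\<ge>1. \<forall>x\<in>Sigma_A N A. \<forall>y\<in>Sigma_A N A. (\<forall>j<k+1. x j = y j) \<longrightarrow> cmod (\<psi> x - \<psi> y) \<le> (2 * ?v * ?\<tau>) * \<theta> (k+1) ^ k"
  proof (intro allI impI ballI)
    fix k x y assume k: "1 \<le> k" and x: "x \<in> Sigma_A N A" and y: "y \<in> Sigma_A N A" and xy: "\<forall>j<k+1. x j = y j"
    have tk0: "0 \<le> \<theta> (k+1) ^ k" using nn by simp
    show "cmod (\<psi> x - \<psi> y) \<le> (2 * ?v * ?\<tau>) * \<theta> (k+1) ^ k"
    proof (cases "m \<le> k + 1")
      case True
      have eq: "\<psi> x - \<psi> y = \<phi> x - \<phi> y" unfolding \<psi>_def using E_const[OF xy True, of N A \<mu> \<phi>] by simp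
      have "cmod (\<phi> x - \<phi> y) \<le> ?v * \<theta> (k+1+1) ^ (k+1)" using E x y xy by blast
      hence "cmod (\<psi> x - \<psi> y) \<le> ?v * \<theta> (k+1+1) ^ (k+1)" by (simp only: eq)
      also have "\<dots> \<le> ?v * (?\<tau> * \<theta> (k+1) ^ k)"
      proof (rule mult_left_mono[OF _ v0])
        have a: "\<theta> (k+2) \<le> \<theta> (k+1)" using theta_mono[OF mo, of "k+1" "k+2"] by simp
        have b: "0 \<le> \<theta> (k+2)" using nn by simp
        have c: "\<theta> (k+2) \<le> ?\<tau>" using theta_mono[OF mo, of "m+1" "k+2"] True by simp
        have "\<theta> (k+2) ^ (k+1) = \<theta> (k+2) * \<theta> (k+2) ^ k" by simp
        also have "\<dots> \<le> ?\<tau> * \<theta> (k+1) ^ k" using a b c \<tau>0 by (intro mult_mono power_mono) auto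
        finally show "\<theta> (k+1+1) ^ (k+1) \<le> ?\<tau> * \<theta> (k+1) ^ k" by (simp add: numeral_2_eq_2)
      qed
      also have "\<dots> \<le> (2 * ?v * ?\<tau>) * \<theta> (k+1) ^ k" using v0 \<tau>0 tk0
        by (simp add: algebra_simps mult_nonneg_nonneg)
      finally show ?thesis .
    next
      case False
      have "cmod (\<psi> x - \<psi> y) \<le> cmod (\<psi> x) + cmod (\<psi> y)" by (rule norm_triangle_ineq4)
      also have "\<dots> \<le> 2 * (?v * ?\<tau> ^ m)" using supm[OF x] supm[OF y] by linarith
      also have "?\<tau> ^ m \<le> ?\<tau> * \<theta> (k+1) ^ k"
      proof -
        have mk: "m = (m - k) + k" using False by simp
        have "?\<tau> ^ (m - k) \<le> ?\<tau> ^ 1" using False \<tau>0 tm1 by (intro power_decreasing) auto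
        moreover have "?\<tau> ^ k \<le> \<theta> (k+1) ^ k"
          using theta_mono[OF mo, of "k+1" "m+1"] False \<tau>0 by (intro power_mono) auto
        ultimately have "?\<tau> ^ (m - k) * ?\<tau> ^ k \<le> ?\<tau> * \<theta> (k+1) ^ k"
          using \<tau>0 by (intro mult_mono) auto
        thus ?thesis by (subst mk) (simp add: power_add)
      qed
      hence "2 * (?v * ?\<tau> ^ m) \<le> 2 * (?v * (?\<tau> * \<theta> (k+1) ^ k))" using v0 by (intro mult_left_mono) auto
      finally show ?thesis by (simp add: algebra_simps)
    qed
  qed
  have G: "transfer N A g \<psi> \<in> Bspace N A \<theta> \<and>
         Bnorm N A \<theta> (transfer N A g \<psi>) \<le> real N * b1 * (3 * (?v * ?\<tau>) + 2 * ?v * ?\<tau> + 3 * b2 * \<theta> 1 * (?v * ?\<tau>))"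
    by (rule L_gen[OF mo nn lim b1 b2 H _ _ sup wb]) (use \<tau>0 v0 in auto)
  have "real N * b1 * (3 * (?v * ?\<tau>) + 2 * ?v * ?\<tau> + 3 * b2 * \<theta> 1 * (?v * ?\<tau>)) \<le>
        ((real N * b1 * (5 + \<theta> 1 * (1 + 3 * b2)) + 1) * ?\<tau>) * (?s + ?v)"
  proof -
    have "0 \<le> ?\<tau> * (real N * b1 * (5 * ?s + ?T1 * ?s + ?T1 * ?v + 3 * b2 * ?T1 * ?s) + (?s + ?v))"
      using b1 b2 s0 v0 T10 \<tau>0 by (intro add_nonneg_nonneg mult_nonneg_nonneg) auto
    moreover have "((real N * b1 * (5 + \<theta> 1 * (1 + 3 * b2)) + 1) * ?\<tau>) * (?s + ?v) =
        real N * b1 * (3 * (?v * ?\<tau>) + 2 * ?v * ?\<tau> + 3 * b2 * \<theta> 1 * (?v * ?\<tau>)) +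
        ?\<tau> * (real N * b1 * (5 * ?s + ?T1 * ?s + ?T1 * ?v + 3 * b2 * ?T1 * ?s) + (?s + ?v))"
      by (simp add: algebra_simps)
    ultimately show ?thesis by linarith
  qed
  thus ?thesis using G E Peq by simp
qed

lemma opnorm_pow:
  assumes "opnorm_le N A \<theta> T c" "0 \<le> c"
  shows "opnorm_le N A \<theta> (T ^^ n) (c ^ n)"
proof (induction n)
  case 0 thus ?case unfolding opnorm_le_def by simp
next
  case (Suc n)
  show ?case unfolding opnorm_le_def
  proof
    fix \<phi> assume \<phi>: "\<phi> \<in> Bspace N A \<theta>"
    have a: "(T ^^ n) \<phi> \<in> Bspace N A \<theta>" "Bnorm N A \<theta> ((T ^^ n) \<phi>) \<le> c ^ n * Bnorm N A \<theta> \<phi>"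
      using Suc \<phi> unfolding opnorm_le_def by auto
    have b: "T ((T ^^ n) \<phi>) \<in> Bspace N A \<theta>" "Bnorm N A \<theta> (T ((T ^^ n) \<phi>)) \<le> c * Bnorm N A \<theta> ((T ^^ n) \<phi>)"
      using assms(1) a(1) unfolding opnorm_le_def by auto
    have "c * Bnorm N A \<theta> ((T ^^ n) \<phi>) \<le> c * (c ^ n * Bnorm N A \<theta> \<phi>)"
      using a(2) assms(2) by (rule mult_left_mono)
    thus "(T ^^ Suc n) \<phi> \<in> Bspace N A \<theta> \<and> Bnorm N A \<theta> ((T ^^ Suc n) \<phi>) \<le> c ^ Suc n * Bnorm N A \<theta> \<phi>"
      using b by (simp add: mult.assoc)
  qed
qed


theorem lemma3p6:
  fixes N :: nat and \<theta> :: "nat \<Rightarrow> real" and b1 b2 :: real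
  assumes "\<forall>m\<ge>1. \<theta> (Suc m) \<le> \<theta> m" and "\<forall>m\<ge>1. \<theta> m \<ge> 0" and "\<theta> \<longlonglongrightarrow> 0"
    and "b1 > 0" and "b2 > 0"
  shows "\<exists>C2>0. \<forall>A \<mu>. zero_one_matrix N A \<and> aperiodic N A \<and> good_measure N A \<mu> \<longrightarrow>
           (\<forall>m q g. m \<ge> 1 \<and> q \<ge> 1 \<and> \<theta> (m + 1) \<le> 1 \<and> g \<in> Vspace N A \<and> condH N A \<theta> b1 b2 g \<longrightarrow>
              opnorm_le N A \<theta> (transfer N A g) C2 \<and>
              opnorm_le N A \<theta> (\<lambda>\<phi>. (transfer N A g ^^ q) \<phi> - Kq N A \<mu> g m q \<phi>)
                 (C2 ^ q * \<theta> (m + 1) ^ q))"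
proof -
  note mo = assms(1) and nn = assms(2) and lim = assms(3) and b1 = assms(4) and b2 = assms(5)
  define K0 where "K0 = real N * b1 * (5 + \<theta> 1 * (1 + 3 * b2)) + 1"
  have T10: "0 \<le> \<theta> 1" using nn by simp
  have K0pos: "K0 > 0" unfolding K0_def using b1 b2 T10
    by (intro add_nonneg_pos mult_nonneg_nonneg) auto
  show ?thesis
  proof (intro exI[of _ K0] conjI K0pos allI impI)
    fix A :: "nat \<Rightarrow> nat \<Rightarrow> nat" and \<mu> :: "seq measure" and m q :: nat and g :: cfun
    assume hA: "zero_one_matrix N A \<and> aperiodic N A \<and> good_measure N A \<mu>"
      and hm: "m \<ge> 1 \<and> q \<ge> 1 \<and> \<theta> (m + 1) \<le> 1 \<and> g \<in> Vspace N A \<and> condH N A \<theta> b1 b2 g"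
    have gm: "good_measure N A \<mu>" using hA by simp
    have m1: "1 \<le> m" and tm1: "\<theta> (m+1) \<le> 1" and H: "condH N A \<theta> b1 b2 g" using hm by auto
    show "opnorm_le N A \<theta> (transfer N A g) K0"
      unfolding opnorm_le_def K0_def using L_norm[OF mo nn lim b1 b2 H] by blast
    define P where "P = (\<lambda>\<psi>. transfer N A g \<psi> - Kop N A \<mu> g m \<psi>)"
    have Pn: "opnorm_le N A \<theta> P (K0 * \<theta> (m+1))"
      unfolding opnorm_le_def K0_def P_def using P_norm[OF mo nn lim b1 b2 H gm m1 tm1] by blast
    have "opnorm_le N A \<theta> (P ^^ q) ((K0 * \<theta> (m+1)) ^ q)"
      by (rule opnorm_pow[OF Pn]) (use K0pos nn in simp)
    moreover have "(\<lambda>\<phi>. (transfer N A g ^^ q) \<phi> - Kq N A \<mu> g m q \<phi>) = P ^^ q"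
      unfolding Kq_def P_def by (intro ext) (simp add: fun_diff_def)
    ultimately show "opnorm_le N A \<theta> (\<lambda>\<phi>. (transfer N A g ^^ q) \<phi> - Kq N A \<mu> g m q \<phi>)
                 (K0 ^ q * \<theta> (m + 1) ^ q)"
      by (simp add: power_mult_distrib)
  qed
qed

end
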